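(* Let $a,c\ge 1$ be integers with $a\neq c$. Then $U=\{(a,0),(c,0)\}\subseteq\mathcal{B}$ is unavoidable.
   Context: The bicyclic inverse semigroup is $\mathcal{B}=\{(a,b)\in\mathbb{Z}\times\mathbb{Z}\mid a\ge 0,\ a+b\ge 0\}$ with multiplication $(a,b)(c,d)=(\max\{c+d,a\}-d,\ b+d)$. A subset $U\subseteq\mathcal{B}$ is called avoidable if $\mathcal{B}$ can be partitioned into two subsets $A$ and $B$ such that no element of $U$ can be written as a product $xy$ of two distinct elements $x\neq y$ both in $A$, or both in $B$. A set is unavoidable if it is not avoidable. *)

theory Defs
  imports Main
begin

definition bicyclic :: "(int \<times> int) set" where
  "bicyclic = {(a, b). a \<ge> 0 \<and> a + b \<ge> 0}"

definition bmult :: "int \<times> int \<Rightarrow> int \<times> int \<Rightarrow> int \<times> int" where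
  "bmult x y = (case x of (a, b) \<Rightarrow> case y of (c, d) \<Rightarrow> (max (c + d) a - d, b + d))"

definition avoidable :: "(int \<times> int) set \<Rightarrow> bool" where
  "avoidable U \<longleftrightarrow> (\<exists>A B. A \<union> B = bicyclic \<and> A \<inter> B = {} \<and>
     (\<forall>x\<in>A. \<forall>y\<in>A. x \<noteq> y \<longrightarrow> bmult x y \<notin> U) \<and>
     (\<forall>x\<in>B. \<forall>y\<in>B. x \<noteq> y \<longrightarrow> bmult x y \<notin> U))"

definition unavoidable :: "(int \<times> int) set \<Rightarrow> bool" where
  "unavoidable U \<longleftrightarrow> \<not> avoidable U"

end

theory Submission
  imports Defs
begin

theorem corollary5p2:
  fixes a c :: int
  assumes "a \<ge> 1" and "c \<ge> 1" and "a \<noteq> c"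
  shows "unavoidable {(a, 0), (c, 0)}"
proof -
  let ?U = "{(a, 0), (c, 0)}"
  have m1: "bmult (0,0) (a,0) \<in> ?U" "bmult (a,0) (0,0) \<in> ?U"
    using assms by (auto simp: bmult_def max_def)
  have m2: "bmult (0,0) (c,0) \<in> ?U" "bmult (c,0) (0,0) \<in> ?U"
    using assms by (auto simp: bmult_def max_def)
  have m3: "bmult (a,0) (c,0) \<in> ?U" "bmult (c,0) (a,0) \<in> ?U"
    using assms by (auto simp: bmult_def max_def)
  have inB: "(0,0) \<in> bicyclic" "(a,0) \<in> bicyclic" "(c,0) \<in> bicyclic"
    using assms by (auto simp: bicyclic_def)
  have d: "(0::int,0::int) \<noteq> (a,0)" "(0::int,0::int) \<noteq> (c,0)" "(a,0) \<noteq> (c,0)"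
    using assms by auto
  show ?thesis
    unfolding unavoidable_def avoidable_def
  proof
    assume "\<exists>A B. A \<union> B = bicyclic \<and> A \<inter> B = {} \<and>
     (\<forall>x\<in>A. \<forall>y\<in>A. x \<noteq> y \<longrightarrow> bmult x y \<notin> ?U) \<and>
     (\<forall>x\<in>B. \<forall>y\<in>B. x \<noteq> y \<longrightarrow> bmult x y \<notin> ?U)"
    then obtain A B where h: "A \<union> B = bicyclic"
      "\<forall>x\<in>A. \<forall>y\<in>A. x \<noteq> y \<longrightarrow> bmult x y \<notin> ?U"
      "\<forall>x\<in>B. \<forall>y\<in>B. x \<noteq> y \<longrightarrow> bmult x y \<notin> ?U" by blast
    have "(0,0) \<in> A \<or> (0,0) \<in> B" "(a,0) \<in> A \<or> (a,0) \<in> B" "(c,0) \<in> A \<or> (c,0) \<in> B"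
      using inB h(1) by blast+
    then show False using h(2,3) m1 m2 m3 d by metis
  qed
qed

end
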